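(* Let $h(x,u)$ be a symmetric ($h(x,u)=h(u,x)$) polynomial of degree at most two in each of $x,u$, with discriminant $h_u^2-2hh_{uu}=r(x)$. Then: - if $r=0$: either $h=\frac1\alpha(x-u)^2$ for a constant $\alpha$ (q0), or $h=(\gamma_0xu+\gamma_1(x+u)+\gamma_2)^2$ for constants $\gamma_i$ (h1); - if $r=1$: either $h=\frac{1}{2\alpha}(x-u)^2-\frac\alpha2$ (q1), or $h=\gamma_0(x+u)^2+\gamma_1(x+u)+\gamma_2$ with $\gamma_1^2-4\gamma_0\gamma_2=1$ (h2); - if $r=x$: $h=\frac{1}{4\alpha}(x-u)^2-\frac\alpha2(x+u)+\frac{\alpha^3}{4}$ (q2); - if $r=x^2$: $h=\gamma_0x^2u^2+\gamma_1xu+\gamma_2$ with $\gamma_1^2-4\gamma_0\gamma_2=1$ (h3), or $h$ is of the form (q3) below with $\delta=0$; - if $r=x^2-\delta^2$: $h=\frac{\alpha}{1-\alpha^2}(x^2+u^2)-\frac{1+\alpha^2}{1-\alpha^2}xu+\delta^2\frac{1-\alpha^2}{4\alpha}$ (q3); - if $r=4x^3-g_2x-g_3$ with $g_2^3-27g_3^2\neq0$: $h=\frac{1}{\sqrt{r(\alpha)}}\Big[\big(xu+\alpha(x+u)+g_2/4\big)^2-(x+u+\alpha)(4\alpha xu-g_3)\Big]$ (q4). In each case $\alpha$ denotes a constant (for which the expression is defined) and $\sqrt{r(\alpha)}$ denotes either square root.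
   Context: Subscripts denote partial derivatives; $h_u^2-2hh_{uu}$ is the discriminant of $h$ as a quadratic polynomial in $u$ and is a polynomial in $x$ of degree at most four. *)

theory Defs
  imports "HOL-Analysis.Analysis"
begin

definition biq :: "(nat \<Rightarrow> nat \<Rightarrow> complex) \<Rightarrow> complex \<Rightarrow> complex \<Rightarrow> complex" where
  "biq a x u = (\<Sum>i\<le>2. \<Sum>j\<le>2. a i j * x ^ i * u ^ j)"

definition biq_disc :: "(nat \<Rightarrow> nat \<Rightarrow> complex) \<Rightarrow> complex \<Rightarrow> complex \<Rightarrow> complex" where
  "biq_disc a x u =
     (deriv (\<lambda>v. biq a x v) u)\<^sup>2 - 2 * biq a x u * deriv (deriv (\<lambda>v. biq a x v)) u"

end

theory Submission
  imports Defs
begin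


lemma biq_expand:
  "biq a x u = a 0 0 + a 0 1 * u + a 0 2 * u^2 + a 1 0 * x + a 1 1 * x * u + a 1 2 * x * u^2
     + a 2 0 * x^2 + a 2 1 * x^2 * u + a 2 2 * x^2 * u^2"
  unfolding biq_def by (simp add: numeral_2_eq_2 atMost_Suc algebra_simps)

lemma quad0:
  fixes c0 c1 c2 :: complex
  assumes "\<forall>x. c2 * x^2 + c1 * x + c0 = 0"
  shows "c0 = 0 \<and> c1 = 0 \<and> c2 = 0"
proof -
  have "\<forall>x. poly [:c0, c1, c2:] x = 0" using assms by (simp add: algebra_simps power2_eq_square)
  then have "[:c0, c1, c2:] = 0" using poly_all_0_iff_0 by blast
  then show ?thesis by simp
qed

lemma quart0:
  fixes c0 c1 c2 c3 c4 :: complex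
  assumes "\<forall>x. c4 * x^4 + c3 * x^3 + c2 * x^2 + c1 * x + c0 = 0"
  shows "c0 = 0 \<and> c1 = 0 \<and> c2 = 0 \<and> c3 = 0 \<and> c4 = 0"
proof -
  have "\<forall>x. poly [:c0, c1, c2, c3, c4:] x = 0" using assms
    by (simp add: algebra_simps power2_eq_square power3_eq_cube power4_eq_xxxx)
  then have "[:c0, c1, c2, c3, c4:] = 0" using poly_all_0_iff_0 by blast
  then show ?thesis by simp
qed

lemma deriv_quad: "deriv (\<lambda>v. A * v^2 + B * v + (C::complex)) = (\<lambda>v. 2 * A * v + B)"
proof
  fix v
  have "((\<lambda>v. A * v^2 + B * v + C) has_field_derivative (2 * A * v + B)) (at v)"
    by (auto intro!: derivative_eq_intros)
  then show "deriv (\<lambda>v. A * v^2 + B * v + C) v = 2 * A * v + B" by (rule DERIV_imp_deriv)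
qed

lemma deriv_lin: "deriv (\<lambda>v. A * v + (B::complex)) = (\<lambda>v. A)"
proof
  fix v
  have "((\<lambda>v. A * v + B) has_field_derivative A) (at v)"
    by (auto intro!: derivative_eq_intros)
  then show "deriv (\<lambda>v. A * v + B) v = A" by (rule DERIV_imp_deriv)
qed

lemma disc_expand:
  "biq_disc a x u = (a 0 1 + a 1 1 * x + a 2 1 * x^2)^2
     - 4 * (a 0 2 + a 1 2 * x + a 2 2 * x^2) * (a 0 0 + a 1 0 * x + a 2 0 * x^2)"
proof -
  define A where "A = a 0 2 + a 1 2 * x + a 2 2 * x^2"
  define B where "B = a 0 1 + a 1 1 * x + a 2 1 * x^2"
  define C where "C = a 0 0 + a 1 0 * x + a 2 0 * x^2"
  have h: "(\<lambda>v. biq a x v) = (\<lambda>v. A * v^2 + B * v + C)"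
    unfolding biq_expand A_def B_def C_def by (rule ext) (simp add: algebra_simps)
  have d2: "deriv (\<lambda>v. 2 * A * v + B) u = 2 * A" by (simp add: deriv_lin)
  show ?thesis unfolding biq_disc_def h deriv_quad d2
    unfolding A_def[symmetric] B_def[symmetric] C_def[symmetric]
    by (simp add: algebra_simps power2_eq_square)
qed

lemma sym_coeffs:
  assumes sym: "\<forall>x u. biq a x u = biq a u x"
  shows "a 0 1 = a 1 0 \<and> a 0 2 = a 2 0 \<and> a 1 2 = a 2 1"
proof -
  have "\<forall>u x. (a 2 0 + a 2 1 * u + a 2 2 * u^2 - (a 0 2 + a 1 2 * u + a 2 2 * u^2)) * x^2
      + (a 1 0 + a 1 1 * u + a 1 2 * u^2 - (a 0 1 + a 1 1 * u + a 2 1 * u^2)) * x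
      + (a 0 0 + a 0 1 * u + a 0 2 * u^2 - (a 0 0 + a 1 0 * u + a 2 0 * u^2)) = 0"
    using sym unfolding biq_expand by (auto simp: algebra_simps)
  then have "\<forall>u. (a 2 0 + a 2 1 * u + a 2 2 * u^2 - (a 0 2 + a 1 2 * u + a 2 2 * u^2)) = 0
      \<and> (a 1 0 + a 1 1 * u + a 1 2 * u^2 - (a 0 1 + a 1 1 * u + a 2 1 * u^2)) = 0"
    using quad0 by blast
  then have "\<forall>u. (a 2 2 - a 2 2) * u^2 + (a 2 1 - a 1 2) * u + (a 2 0 - a 0 2) = 0
     \<and> (a 1 2 - a 2 1) * u^2 + (a 1 1 - a 1 1) * u + (a 1 0 - a 0 1) = 0"
    by (auto simp: algebra_simps)
  then have "\<forall>u. (a 2 2 - a 2 2) * u^2 + (a 2 1 - a 1 2) * u + (a 2 0 - a 0 2) = 0"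
    and "\<forall>u. (a 1 2 - a 2 1) * u^2 + (a 1 1 - a 1 1) * u + (a 1 0 - a 0 1) = 0" by auto
  from quad0[OF this(1)] quad0[OF this(2)] show ?thesis by auto
qed


definition Hf :: "complex \<Rightarrow> complex \<Rightarrow> complex \<Rightarrow> complex \<Rightarrow> complex \<Rightarrow> complex \<Rightarrow> complex \<Rightarrow> complex \<Rightarrow> complex" where
  "Hf p q c s t w x u = p*x^2*u^2 + q*(x^2*u + x*u^2) + c*(x^2+u^2) + s*x*u + t*(x+u) + w"

lemma f_h1: "(g0*x*u + g1*(x+u) + g2)^2 = Hf (g0^2) (2*g0*g1) (g1^2) (2*g0*g2 + 2*g1^2) (2*g1*g2) (g2^2) x u"
  unfolding Hf_def by algebra

lemma f_q0: "(\<alpha>::complex) \<noteq> 0 \<Longrightarrow> (x-u)^2/\<alpha> = Hf 0 0 (1/\<alpha>) (-2/\<alpha>) 0 0 x u"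
  unfolding Hf_def by (simp add: field_simps power2_eq_square)

lemma f_q1: "(\<alpha>::complex) \<noteq> 0 \<Longrightarrow> (x-u)^2/(2*\<alpha>) - \<alpha>/2 = Hf 0 0 (1/(2*\<alpha>)) (-1/\<alpha>) 0 (-\<alpha>/2) x u"
  unfolding Hf_def by (simp add: field_simps power2_eq_square)

lemma f_h2: "g0*(x+u)^2 + g1*(x+u) + g2 = Hf 0 0 g0 (2*g0) g1 g2 x u"
  unfolding Hf_def by (simp add: field_simps power2_eq_square)

lemma f_q2: "(\<alpha>::complex) \<noteq> 0 \<Longrightarrow> (x - u)\<^sup>2 / (4 * \<alpha>) - \<alpha> / 2 * (x + u) + \<alpha> ^ 3 / 4
   = Hf 0 0 (1/(4*\<alpha>)) (-1/(2*\<alpha>)) (-\<alpha>/2) (\<alpha>^3/4) x u"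
  unfolding Hf_def by (simp add: field_simps power2_eq_square)

lemma f_h3: "g0 * x\<^sup>2 * u\<^sup>2 + g1 * x * u + g2 = Hf g0 0 0 g1 0 g2 x u"
  unfolding Hf_def by simp

lemma f_q3: "(\<alpha>::complex) \<noteq> 0 \<Longrightarrow> \<alpha>\<^sup>2 \<noteq> 1 \<Longrightarrow>
  \<alpha> / (1 - \<alpha>\<^sup>2) * (x\<^sup>2 + u\<^sup>2) - (1 + \<alpha>\<^sup>2) / (1 - \<alpha>\<^sup>2) * x * u + \<delta>\<^sup>2 * (1 - \<alpha>\<^sup>2) / (4 * \<alpha>)
  = Hf 0 0 (\<alpha> / (1 - \<alpha>\<^sup>2)) (-(1 + \<alpha>\<^sup>2) / (1 - \<alpha>\<^sup>2)) 0 (\<delta>\<^sup>2 * (1 - \<alpha>\<^sup>2) / (4 * \<alpha>)) x u"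
  unfolding Hf_def by (simp add: field_simps)

lemma f_q3': "(\<alpha>::complex) \<noteq> 0 \<Longrightarrow> \<alpha>\<^sup>2 \<noteq> 1 \<Longrightarrow>
  \<alpha> / (1 - \<alpha>\<^sup>2) * (x\<^sup>2 + u\<^sup>2) - (1 + \<alpha>\<^sup>2) / (1 - \<alpha>\<^sup>2) * x * u
  = Hf 0 0 (\<alpha> / (1 - \<alpha>\<^sup>2)) (-(1 + \<alpha>\<^sup>2) / (1 - \<alpha>\<^sup>2)) 0 0 x u"
  unfolding Hf_def by (simp add: field_simps)

lemma f_q4: "(S::complex) \<noteq> 0 \<Longrightarrow> 1 / S * ((x * u + \<alpha> * (x + u) + g2 / 4)\<^sup>2
                                         - (x + u + \<alpha>) * (4 * \<alpha> * x * u - g3))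
  = Hf (1/S) (-2*\<alpha>/S) (\<alpha>^2/S) ((g2/2-2*\<alpha>^2)/S) ((\<alpha>*g2/2+g3)/S) ((g2^2/16+\<alpha>*g3)/S) x u"
  unfolding Hf_def by (simp add: field_simps power2_eq_square)


lemma cancel4: "4*(p::complex)*a = 4*p*b \<Longrightarrow> p \<noteq> 0 \<Longrightarrow> a = b" by simp

lemma pnz:
  fixes p q c s t w r3 r2 r1 r0 :: complex
  assumes p: "p \<noteq> 0" and E4: "q^2 - 4*p*c = 0" and E3: "2*q* s - 4*p*t - 4*q*c = r3"
    and E2: "s^2 - 2*q*t - 4*p*w - 4*c^2 = r2" and E1: "2* s*t - 4*q*w - 4*c*t = r1"
    and E0: "t^2 - 4*c*w = r0"
  defines "k \<equiv> q/(2*p)"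
  shows "r1 = - s*r3/(2*p) + 2*k*r2 - k^2*r3"
    and "r0 = -(k* s - 2*p*k^3)*r3/(2*p) + r3^2/(16*p^2) + k^2*r2 - k^3*r3"
    and "q = 2*p*k" and "c = p*k^2" and "t = k* s - 2*p*k^3 - r3/(4*p)"
    and "w = ((s - 2*p*k^2)^2 - r2 + k*r3)/(4*p)"
proof -
  show hq: "q = 2*p*k" unfolding k_def using p by simp
  have "4*p*c = 4*p*(p*k^2)" using E4 hq by algebra
  then show hc: "c = p*k^2" using p by force
  have "4*p*t = 2*q* s - 4*q*c - r3" using E3 by (simp add: algebra_simps)
  also have "\<dots> = 4*p*(k* s - 2*p*k^3 - r3/(4*p))" using p unfolding hq hc
    by (simp add: field_simps power3_eq_cube power2_eq_square)
  finally show ht: "t = k* s - 2*p*k^3 - r3/(4*p)" using p by (rule cancel4)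
  have "4*p*w = s^2 - 2*q*t - 4*c^2 - r2" using E2 by (simp add: algebra_simps)
  also have "\<dots> = 4*p*(((s - 2*p*k^2)^2 - r2 + k*r3)/(4*p))" using p unfolding hq hc ht
    by (simp add: field_simps power3_eq_cube power2_eq_square)
  finally show hw: "w = ((s - 2*p*k^2)^2 - r2 + k*r3)/(4*p)" using p by (rule cancel4)
  show "r1 = - s*r3/(2*p) + 2*k*r2 - k^2*r3" using p unfolding E1[symmetric] hq hc ht hw
    by (simp add: field_simps power3_eq_cube power2_eq_square; algebra)
  show "r0 = -(k* s - 2*p*k^3)*r3/(2*p) + r3^2/(16*p^2) + k^2*r2 - k^3*r3"
    using p unfolding E0[symmetric] hq hc ht hw
    by (simp add: field_simps power3_eq_cube power2_eq_square; algebra)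
qed

lemma sq_split: "(s - 2*c)*(s + 2*(c::complex)) = 0 \<Longrightarrow> s = 2*c \<or> s = -2*c"
proof -
  assume "(s - 2*c)*(s + 2*c) = 0"
  then have "s - 2*c = 0 \<or> s + 2*c = 0" by simp
  then show ?thesis by (auto simp: eq_neg_iff_add_eq_0)
qed

lemma case0:
  fixes p q c s t w :: complex
  assumes E4: "q^2 - 4*p*c = 0" and E3: "2*q* s - 4*p*t - 4*q*c = 0"
    and E2: "s^2 - 2*q*t - 4*p*w - 4*c^2 = 0" and E1: "2* s*t - 4*q*w - 4*c*t = 0"
    and E0: "t^2 - 4*c*w = 0"
  shows "(\<exists>\<alpha>. \<alpha> \<noteq> 0 \<and> (\<forall>x u. Hf p q c s t w x u = (x - u)\<^sup>2 / \<alpha>))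
     \<or> (\<exists>\<gamma>0 \<gamma>1 \<gamma>2. \<forall>x u. Hf p q c s t w x u = (\<gamma>0 * x * u + \<gamma>1 * (x + u) + \<gamma>2)\<^sup>2)"
proof (cases "c = 0")
  case False
  obtain g where g: "g^2 = c" using power2_csqrt by blast
  with False have g0: "g \<noteq> 0" by auto
  show ?thesis
  proof (cases "q = 0")
    case False
    have "p = (q/(2*g))^2" using E4 g g0 by (simp add: field_simps power2_eq_square) algebra
    moreover have "q = 2*(q/(2*g))*g" using g0 by simp
    moreover have "s = 2*(q/(2*g))*(t/(2*g)) + 2*g^2"
    proof -
      have "q * (2*c* s - q*t - 4*c^2) = 0" using E4 E3 by algebra
      then have "2*c* s - q*t - 4*c^2 = 0" using False by simp
      then have "2*c* s = q*t + 4*c^2" by algebra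
      then show ?thesis using g g0 by (simp add: field_simps power2_eq_square) algebra
    qed
    moreover have "t = 2*g*(t/(2*g))" using g0 by simp
    moreover have "w = (t/(2*g))^2" using E0 g g0 by (simp add: field_simps power2_eq_square) algebra
    ultimately have "\<forall>x u. Hf p q c s t w x u = ((q/(2*g)) * x * u + g * (x + u) + t/(2*g))\<^sup>2"
      unfolding f_h1 using g by metis
    then show ?thesis by blast
  next
    case True
    then have p0: "p = 0" using E4 \<open>c \<noteq> 0\<close> by simp
    have "(s - 2*c)*(s + 2*c) = 0" using E2 True p0 by algebra
    then consider "s = 2*c" | "s = -2*c" using sq_split by blast
    then show ?thesis
    proof cases
      case 1
      have "w = (t/(2*g))^2" using E0 g g0 by (simp add: field_simps power2_eq_square) algebra
      then have "\<forall>x u. Hf p q c s t w x u = (0 * x * u + g * (x + u) + t/(2*g))\<^sup>2"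
        unfolding f_h1 using g g0 1 p0 True by (simp add: power2_eq_square)
      then show ?thesis by blast
    next
      case 2
      have t0: "t = 0" using E1 2 True \<open>c \<noteq> 0\<close> by simp
      then have w0: "w = 0" using E0 \<open>c \<noteq> 0\<close> by simp
      have "\<forall>x u. Hf p q c s t w x u = (x - u)\<^sup>2 / (1/c)"
        using f_q0[of "1/c"] \<open>c \<noteq> 0\<close> t0 w0 p0 True 2 by simp
      then show ?thesis using \<open>c \<noteq> 0\<close> by (intro disjI1 exI[of _ "1/c"]) simp
    qed
  qed
next
  case True
  then have q0: "q = 0" and t0: "t = 0" using E4 E0 by auto
  have sw: "s^2 = 4*p*w" using E2 True q0 by algebra
  show ?thesis
  proof (cases "p = 0")
    case False
    obtain g where g: "g^2 = p" using power2_csqrt by blast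
    with False have g0: "g \<noteq> 0" by auto
    have "w = (s/(2*g))^2" using sw g g0 by (simp add: field_simps power2_eq_square) algebra
    moreover have "s = 2*g*(s/(2*g))" using g0 by simp
    ultimately have "\<forall>x u. Hf p q c s t w x u = (g * x * u + 0 * (x + u) + s/(2*g))\<^sup>2"
      unfolding f_h1 using g g0 True q0 t0 \<open>w = (s/(2*g))^2\<close> by simp
    then show ?thesis by blast
  next
    case p: True
    then have s0: "s = 0" using sw by simp
    have "\<forall>x u. Hf p q c s t w x u = (0 * x * u + 0 * (x + u) + csqrt w)\<^sup>2"
      unfolding f_h1 using p s0 True q0 t0 by (simp add: power2_csqrt)
    then show ?thesis by blast
  qed
qed


lemma case1:
  fixes p q c s t w :: complex
  assumes E4: "q^2 - 4*p*c = 0" and E3: "2*q* s - 4*p*t - 4*q*c = 0"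
    and E2: "s^2 - 2*q*t - 4*p*w - 4*c^2 = 0" and E1: "2* s*t - 4*q*w - 4*c*t = 0"
    and E0: "t^2 - 4*c*w = 1"
  shows "(\<exists>\<alpha>. \<alpha> \<noteq> 0 \<and> (\<forall>x u. Hf p q c s t w x u = (x - u)\<^sup>2 / (2 * \<alpha>) - \<alpha> / 2))
     \<or> (\<exists>\<gamma>0 \<gamma>1 \<gamma>2. \<gamma>1\<^sup>2 - 4 * \<gamma>0 * \<gamma>2 = 1 \<and>
          (\<forall>x u. Hf p q c s t w x u = \<gamma>0 * (x + u)\<^sup>2 + \<gamma>1 * (x + u) + \<gamma>2))"
proof -
  have p0: "p = 0"
  proof (rule ccontr)
    assume "p \<noteq> 0"
    from pnz(2)[OF this E4 E3 E2 E1 E0] show False by simp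
  qed
  then have q0: "q = 0" using E4 by simp
  have "(s - 2*c)*(s + 2*c) = 0" using E2 q0 p0 by algebra
  then consider "s = 2*c" | "s = -2*c" using sq_split by blast
  then show ?thesis
  proof cases
    case 1
    have "\<forall>x u. Hf p q c s t w x u = c * (x + u)\<^sup>2 + t * (x + u) + w"
      unfolding f_h2 using 1 p0 q0 by simp
    then show ?thesis using E0 by blast
  next
    case 2
    show ?thesis
    proof (cases "c = 0")
      case True
      then have "s = 2*c" using 2 by simp
      have "\<forall>x u. Hf p q c s t w x u = c * (x + u)\<^sup>2 + t * (x + u) + w"
        unfolding f_h2 using \<open>s = 2*c\<close> p0 q0 by simp
      then show ?thesis using E0 by blast
    next
      case False
      have t0: "t = 0" using E1 2 q0 False by simp
      have "4*c*w = -1" using E0 t0 by algebra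
      then have w: "w = -1/(4*c)" using False by (simp add: field_simps)
      have a0: "1/(2*c) \<noteq> 0" using False by simp
      have e1: "1/(2*(1/(2*c))) = c" using False by simp
      have e2: "-1/(1/(2*c)) = s" using False 2 by simp
      have e3: "-(1/(2*c))/2 = w" using False w by simp
      have "\<forall>x u. Hf p q c s t w x u = (x - u)\<^sup>2 / (2 * (1/(2*c))) - (1/(2*c)) / 2"
        using f_q1[OF a0] p0 q0 t0 unfolding e1 e2 e3 by simp
      then show ?thesis using a0 by blast
    qed
  qed
qed

lemma casex:
  fixes p q c s t w :: complex
  assumes E4: "q^2 - 4*p*c = 0" and E3: "2*q* s - 4*p*t - 4*q*c = 0"
    and E2: "s^2 - 2*q*t - 4*p*w - 4*c^2 = 0" and E1: "2* s*t - 4*q*w - 4*c*t = 1"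
    and E0: "t^2 - 4*c*w = 0"
  shows "\<exists>\<alpha>. \<alpha> \<noteq> 0 \<and>
          (\<forall>x u. Hf p q c s t w x u = (x - u)\<^sup>2 / (4 * \<alpha>) - \<alpha> / 2 * (x + u) + \<alpha> ^ 3 / 4)"
proof -
  have p0: "p = 0"
  proof (rule ccontr)
    assume "p \<noteq> 0"
    from pnz(1)[OF this E4 E3 E2 E1 E0] show False by simp
  qed
  then have q0: "q = 0" using E4 by simp
  have "(s - 2*c)*(s + 2*c) = 0" using E2 q0 p0 by algebra
  moreover have "2*t*(s - 2*c) = 1" using E1 q0 by algebra
  ultimately have ne: "s - 2*c \<noteq> 0" and pr: "(s - 2*c)*(s + 2*c) = 0" by auto
  then have "s + 2*c = 0" by simp
  then have s: "s = -2*c" by (simp add: eq_neg_iff_add_eq_0)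
  have c0: "c \<noteq> 0" using ne s by auto
  have "-8*c*t = 1" using E1 q0 s by (simp add: algebra_simps)
  then have "8*c*t = -1" by algebra
  then have t: "t = -1/(8*c)" using c0 by (simp add: field_simps)
  have "4*c*w = t^2" using E0 by simp
  then have w1: "w = t^2/(4*c)" using c0 by (simp add: field_simps)
  have a0: "1/(4*c) \<noteq> 0" using c0 by simp
  have e1: "1/(4*(1/(4*c))) = c" using c0 by simp
  have e2: "-1/(2*(1/(4*c))) = s" using c0 s by simp
  have e3: "-(1/(4*c))/2 = t" using c0 t by simp
  have e4: "(1/(4*c))^3/4 = w" using c0 unfolding w1 t by (simp add: field_simps power2_eq_square power3_eq_cube)
  have "\<forall>x u. Hf p q c s t w x u = (x - u)\<^sup>2 / (4 * (1/(4*c))) - (1/(4*c)) / 2 * (x + u) + (1/(4*c)) ^ 3 / 4"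
    using f_q2[OF a0] p0 q0 unfolding e1 e2 e3 e4 by simp
  then show ?thesis using a0 by blast
qed


lemma divneg: "X \<noteq> 0 \<Longrightarrow> m \<noteq> 0 \<Longrightarrow> -(a/X)/(-4*m/X) = a/(4*m::complex)"
  by (simp add: field_simps)

lemma alpha_lemma:
  fixes c s :: complex
  assumes c0: "c \<noteq> 0" and E: "s^2 - 4*c^2 = 1"
  shows "\<exists>\<alpha>. \<alpha> \<noteq> 0 \<and> \<alpha>\<^sup>2 \<noteq> 1 \<and> \<alpha> / (1 - \<alpha>\<^sup>2) = c \<and> -(1 + \<alpha>\<^sup>2) / (1 - \<alpha>\<^sup>2) = s"
proof -
  define m where "m = s + 2*c"
  have mm: "m*(s - 2*c) = 1" unfolding m_def using E by algebra
  then have m0: "m \<noteq> 0" by auto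
  have m1: "1 - m \<noteq> 0"
  proof
    assume "1 - m = 0"
    then have "m = 1" by simp
    then have "s - 2*c = 1" "s + 2*c = 1" using mm m_def by auto
    then have "c = 0" by algebra
    then show False using c0 by simp
  qed
  have m2: "1 + m \<noteq> 0"
  proof
    assume "1 + m = 0"
    then have m1': "m = -1" by algebra
    then have "s - 2*c = -1" using mm by algebra
    moreover have "s + 2*c = -1" using m1' m_def by simp
    ultimately have "s - 2*c = -1" "s + 2*c = -1" by auto
    then have "c = 0" by algebra
    then show False using c0 by simp
  qed
  have hc: "4*m*c = m^2 - 1" using mm unfolding m_def by algebra
  have hs: "2*m* s = m^2 + 1" using mm unfolding m_def by algebra
  define \<alpha> where "\<alpha> = (1+m)/(1-m)"
  have a0: "\<alpha> \<noteq> 0" unfolding \<alpha>_def using m1 m2 by simp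
  have am: "\<alpha>*(1-m) = 1+m" unfolding \<alpha>_def using m1 by simp
  have prod: "(1 - \<alpha>^2)*(1-m)^2 = -4*m" using am by algebra
  have nz: "(1-m)^2 \<noteq> 0" using m1 by simp
  have h1: "1 - \<alpha>^2 = -4*m/(1-m)^2" using nz by (simp only: prod[symmetric] nonzero_mult_div_cancel_right not_False_eq_True)
  have a1: "\<alpha>^2 \<noteq> 1" using h1 m0 m1 by auto
  have hc': "\<alpha> / (1 - \<alpha>\<^sup>2) = c" unfolding h1 using m0 m1 hc unfolding \<alpha>_def
    by (simp add: field_simps power2_eq_square; algebra)
  have prod2: "(1 + \<alpha>^2)*(1-m)^2 = 2+2*m^2" using am by algebra
  have h2: "1 + \<alpha>^2 = (2+2*m^2)/(1-m)^2" using nz by (simp only: prod2[symmetric] nonzero_mult_div_cancel_right not_False_eq_True)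
  have "-(1 + \<alpha>\<^sup>2) / (1 - \<alpha>\<^sup>2) = (2+2*m^2)/(4*m)" unfolding h1 h2
    by (rule divneg[OF nz m0])
  also have "\<dots> = s" using hs m0 by (simp add: field_simps power2_eq_square; algebra)
  finally show ?thesis using a0 a1 hc' by blast
qed

lemma casex2:
  fixes p q c s t w :: complex
  assumes E4: "q^2 - 4*p*c = 0" and E3: "2*q* s - 4*p*t - 4*q*c = 0"
    and E2: "s^2 - 2*q*t - 4*p*w - 4*c^2 = 1" and E1: "2* s*t - 4*q*w - 4*c*t = 0"
    and E0: "t^2 - 4*c*w = 0"
  shows "(\<exists>\<gamma>0 \<gamma>1 \<gamma>2. \<gamma>1\<^sup>2 - 4 * \<gamma>0 * \<gamma>2 = 1 \<and>
          (\<forall>x u. Hf p q c s t w x u = \<gamma>0 * x\<^sup>2 * u\<^sup>2 + \<gamma>1 * x * u + \<gamma>2))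
     \<or> (\<exists>\<alpha>. \<alpha> \<noteq> 0 \<and> \<alpha>\<^sup>2 \<noteq> 1 \<and>
          (\<forall>x u. Hf p q c s t w x u = \<alpha> / (1 - \<alpha>\<^sup>2) * (x\<^sup>2 + u\<^sup>2)
                             - (1 + \<alpha>\<^sup>2) / (1 - \<alpha>\<^sup>2) * x * u))"
proof (cases "p = 0")
  case False
  have "0 = 2*(q/(2*p))" using pnz(1)[OF False E4 E3 E2 E1 E0] by simp
  then have k0: "q/(2*p) = 0" by simp
  have q0: "q = 0" using pnz(3)[OF False E4 E3 E2 E1 E0] k0 by simp
  have c0: "c = 0" using pnz(4)[OF False E4 E3 E2 E1 E0] k0 by simp
  have t0: "t = 0" using pnz(5)[OF False E4 E3 E2 E1 E0] k0 by simp
  have "s^2 - 4*p*w = 1" using E2 q0 c0 by simp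
  moreover have "\<forall>x u. Hf p q c s t w x u = p * x\<^sup>2 * u\<^sup>2 + s * x * u + w"
    unfolding f_h3 using q0 c0 t0 by simp
  ultimately show ?thesis by blast
next
  case True
  then have q0: "q = 0" using E4 by simp
  have E2': "s^2 - 4*c^2 = 1" using E2 True q0 by simp
  have "2*t*(s - 2*c) = 0" using E1 q0 by algebra
  moreover have "s \<noteq> 2*c" using E2' by (auto simp: power2_eq_square)
  ultimately have t0: "t = 0" by simp
  then have cw: "c*w = 0" using E0 by simp
  show ?thesis
  proof (cases "c = 0")
    case c0: True
    have "s^2 - 4*0*w = 1" using E2' c0 by simp
    moreover have "\<forall>x u. Hf p q c s t w x u = 0 * x\<^sup>2 * u\<^sup>2 + s * x * u + w"
      unfolding f_h3 using True q0 c0 t0 by simp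
    ultimately show ?thesis by blast
  next
    case False
    then have w0: "w = 0" using cw by simp
    obtain \<alpha> where a: "\<alpha> \<noteq> 0" "\<alpha>\<^sup>2 \<noteq> 1" "\<alpha> / (1 - \<alpha>\<^sup>2) = c" "-(1 + \<alpha>\<^sup>2) / (1 - \<alpha>\<^sup>2) = s"
      using alpha_lemma[OF False E2'] by blast
    have "\<forall>x u. Hf p q c s t w x u = \<alpha> / (1 - \<alpha>\<^sup>2) * (x\<^sup>2 + u\<^sup>2) - (1 + \<alpha>\<^sup>2) / (1 - \<alpha>\<^sup>2) * x * u"
      using f_q3'[OF a(1,2)] unfolding a(3,4) using True q0 t0 w0 by simp
    then show ?thesis using a(1,2) by blast
  qed
qed

lemma casexd:
  fixes p q c s t w dl :: complex
  assumes dl: "dl \<noteq> 0"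
  assumes E4: "q^2 - 4*p*c = 0" and E3: "2*q* s - 4*p*t - 4*q*c = 0"
    and E2: "s^2 - 2*q*t - 4*p*w - 4*c^2 = 1" and E1: "2* s*t - 4*q*w - 4*c*t = 0"
    and E0: "t^2 - 4*c*w = -(dl^2)"
  shows "\<exists>\<alpha>. \<alpha> \<noteq> 0 \<and> \<alpha>\<^sup>2 \<noteq> 1 \<and>
          (\<forall>x u. Hf p q c s t w x u = \<alpha> / (1 - \<alpha>\<^sup>2) * (x\<^sup>2 + u\<^sup>2)
                             - (1 + \<alpha>\<^sup>2) / (1 - \<alpha>\<^sup>2) * x * u
                             + dl\<^sup>2 * (1 - \<alpha>\<^sup>2) / (4 * \<alpha>))"
proof -
  have p0: "p = 0"
  proof (rule ccontr)
    assume pn: "p \<noteq> 0"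
    have "0 = 2*(q/(2*p))" using pnz(1)[OF pn E4 E3 E2 E1 E0] by simp
    then have k0: "q/(2*p) = 0" by simp
    have "-(dl^2) = 0" using pnz(2)[OF pn E4 E3 E2 E1 E0] k0 by simp
    then show False using dl by simp
  qed
  then have q0: "q = 0" using E4 by simp
  have E2': "s^2 - 4*c^2 = 1" using E2 p0 q0 by simp
  have "2*t*(s - 2*c) = 0" using E1 q0 by algebra
  moreover have "s \<noteq> 2*c" using E2' by (auto simp: power2_eq_square)
  ultimately have t0: "t = 0" by simp
  then have cw: "4*c*w = dl^2" using E0 by algebra
  then have c0: "c \<noteq> 0" using dl by auto
  obtain \<alpha> where a: "\<alpha> \<noteq> 0" "\<alpha>\<^sup>2 \<noteq> 1" "\<alpha> / (1 - \<alpha>\<^sup>2) = c" "-(1 + \<alpha>\<^sup>2) / (1 - \<alpha>\<^sup>2) = s"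
    using alpha_lemma[OF c0 E2'] by blast
  have a2: "1 - \<alpha>^2 \<noteq> 0" using a(2) by simp
  have "dl\<^sup>2 * (1 - \<alpha>\<^sup>2) / (4 * \<alpha>) = w"
  proof -
    have "4*(\<alpha> / (1 - \<alpha>\<^sup>2))*w = dl^2" using cw a(3) by simp
    then show ?thesis using a(1) a2 by (simp add: field_simps)
  qed
  then have "\<forall>x u. Hf p q c s t w x u = \<alpha> / (1 - \<alpha>\<^sup>2) * (x\<^sup>2 + u\<^sup>2)
                             - (1 + \<alpha>\<^sup>2) / (1 - \<alpha>\<^sup>2) * x * u + dl\<^sup>2 * (1 - \<alpha>\<^sup>2) / (4 * \<alpha>)"
    using f_q3[OF a(1,2), where \<delta> = dl] unfolding a(3,4) using p0 q0 t0 by simp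
  then show ?thesis using a(1,2) by blast
qed

lemma case4:
  fixes p q c s t w g2 g3 :: complex
  assumes E4: "q^2 - 4*p*c = 0" and E3: "2*q* s - 4*p*t - 4*q*c = 4"
    and E2: "s^2 - 2*q*t - 4*p*w - 4*c^2 = 0" and E1: "2* s*t - 4*q*w - 4*c*t = -g2"
    and E0: "t^2 - 4*c*w = -g3"
  shows "\<exists>\<alpha> S. S \<noteq> 0 \<and> S\<^sup>2 = 4 * \<alpha> ^ 3 - g2 * \<alpha> - g3 \<and>
          (\<forall>x u. Hf p q c s t w x u = 1 / S * ((x * u + \<alpha> * (x + u) + g2 / 4)\<^sup>2
                                         - (x + u + \<alpha>) * (4 * \<alpha> * x * u - g3)))"
proof -
  have p0: "p \<noteq> 0"
  proof
    assume "p = 0"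
    then have "q = 0" using E4 by simp
    then show False using E3 \<open>p = 0\<close> by simp
  qed
  define k where "k = q/(2*p)"
  note P = pnz[OF p0 E4 E3 E2 E1 E0, folded k_def]
  have g2: "g2 = 2* s/p + 4*k^2" using P(1) p0 by (simp add: field_simps; algebra)
  have g3: "g3 = 2*(k* s - 2*p*k^3)/p - 1/p^2 + 4*k^3" using P(2) p0
    by (simp add: field_simps power2_eq_square; algebra)
  have S0: "1/p \<noteq> 0" using p0 by simp
  have S2: "(1/p)\<^sup>2 = 4 * (-k) ^ 3 - g2 * (-k) - g3" unfolding g2 g3 using p0
    by (simp add: field_simps power2_eq_square power3_eq_cube; algebra)
  have e1: "1/(1/p) = p" by simp
  have e2: "-2*(-k)/(1/p) = q" using P(3) by simp
  have e3: "(-k)^2/(1/p) = c" using P(4) by simp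
  have e4: "(g2/2-2*(-k)^2)/(1/p) = s" unfolding g2 using p0
    by (simp add: field_simps power2_eq_square; algebra)
  have e5: "((-k)*g2/2+g3)/(1/p) = t" unfolding g2 g3 P(5) using p0
    by (simp add: field_simps power2_eq_square power3_eq_cube; algebra)
  have e6: "(g2^2/16+(-k)*g3)/(1/p) = w" unfolding g2 g3 P(6) using p0
    by (simp add: field_simps power2_eq_square power3_eq_cube; algebra)
  have "\<forall>x u. Hf p q c s t w x u = 1 / (1/p) * ((x * u + (-k) * (x + u) + g2 / 4)\<^sup>2
                                         - (x + u + (-k)) * (4 * (-k) * x * u - g3))"
    using f_q4[OF S0, of x u "-k" g2 g3 for x u] unfolding e2 e3 e4 e5 e6 e1 by simp
  then show ?thesis using S0 S2 by blast
qed


lemma coeffs: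
  fixes p q c s t w r4 r3 r2 r1 r0 :: complex
  assumes H: "\<forall>x. (t + s*x + q*x^2)^2 - 4*(c + q*x + p*x^2)*(w + t*x + c*x^2)
                 = r4*x^4 + r3*x^3 + r2*x^2 + r1*x + r0"
  shows "q^2 - 4*p*c = r4" "2*q* s - 4*p*t - 4*q*c = r3" "s^2 - 2*q*t - 4*p*w - 4*c^2 = r2"
    "2* s*t - 4*q*w - 4*c*t = r1" "t^2 - 4*c*w = r0"
proof -
  have "\<forall>x. (q^2 - 4*p*c - r4) * x^4 + (2*q* s - 4*p*t - 4*q*c - r3) * x^3
      + (s^2 - 2*q*t - 4*p*w - 4*c^2 - r2) * x^2 + (2* s*t - 4*q*w - 4*c*t - r1) * x
      + (t^2 - 4*c*w - r0) = 0"
  proof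
    fix x
    have "(t + s*x + q*x^2)^2 - 4*(c + q*x + p*x^2)*(w + t*x + c*x^2)
                 = r4*x^4 + r3*x^3 + r2*x^2 + r1*x + r0" using H by blast
    then show "(q^2 - 4*p*c - r4) * x^4 + (2*q* s - 4*p*t - 4*q*c - r3) * x^3
      + (s^2 - 2*q*t - 4*p*w - 4*c^2 - r2) * x^2 + (2* s*t - 4*q*w - 4*c*t - r1) * x
      + (t^2 - 4*c*w - r0) = 0" by algebra
  qed
  from quart0[OF this] show "q^2 - 4*p*c = r4" "2*q* s - 4*p*t - 4*q*c = r3"
    "s^2 - 2*q*t - 4*p*w - 4*c^2 = r2" "2* s*t - 4*q*w - 4*c*t = r1" "t^2 - 4*c*w = r0"
    by auto
qed

theorem proposition4:
  fixes a :: "nat \<Rightarrow> nat \<Rightarrow> complex"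
  assumes sym: "\<forall>x u. biq a x u = biq a u x"
  shows
   "((\<forall>x u. biq_disc a x u = 0) \<longrightarrow>
       (\<exists>\<alpha>. \<alpha> \<noteq> 0 \<and> (\<forall>x u. biq a x u = (x - u)\<^sup>2 / \<alpha>))
     \<or> (\<exists>\<gamma>0 \<gamma>1 \<gamma>2. \<forall>x u. biq a x u = (\<gamma>0 * x * u + \<gamma>1 * (x + u) + \<gamma>2)\<^sup>2))
    \<and> ((\<forall>x u. biq_disc a x u = 1) \<longrightarrow>
       (\<exists>\<alpha>. \<alpha> \<noteq> 0 \<and> (\<forall>x u. biq a x u = (x - u)\<^sup>2 / (2 * \<alpha>) - \<alpha> / 2))
     \<or> (\<exists>\<gamma>0 \<gamma>1 \<gamma>2. \<gamma>1\<^sup>2 - 4 * \<gamma>0 * \<gamma>2 = 1 \<and>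
          (\<forall>x u. biq a x u = \<gamma>0 * (x + u)\<^sup>2 + \<gamma>1 * (x + u) + \<gamma>2)))
    \<and> ((\<forall>x u. biq_disc a x u = x) \<longrightarrow>
       (\<exists>\<alpha>. \<alpha> \<noteq> 0 \<and>
          (\<forall>x u. biq a x u = (x - u)\<^sup>2 / (4 * \<alpha>) - \<alpha> / 2 * (x + u) + \<alpha> ^ 3 / 4)))
    \<and> ((\<forall>x u. biq_disc a x u = x\<^sup>2) \<longrightarrow>
       (\<exists>\<gamma>0 \<gamma>1 \<gamma>2. \<gamma>1\<^sup>2 - 4 * \<gamma>0 * \<gamma>2 = 1 \<and>
          (\<forall>x u. biq a x u = \<gamma>0 * x\<^sup>2 * u\<^sup>2 + \<gamma>1 * x * u + \<gamma>2))
     \<or> (\<exists>\<alpha>. \<alpha> \<noteq> 0 \<and> \<alpha>\<^sup>2 \<noteq> 1 \<and>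
          (\<forall>x u. biq a x u = \<alpha> / (1 - \<alpha>\<^sup>2) * (x\<^sup>2 + u\<^sup>2)
                             - (1 + \<alpha>\<^sup>2) / (1 - \<alpha>\<^sup>2) * x * u)))
    \<and> (\<forall>\<delta>. \<delta> \<noteq> 0 \<longrightarrow> (\<forall>x u. biq_disc a x u = x\<^sup>2 - \<delta>\<^sup>2) \<longrightarrow>
       (\<exists>\<alpha>. \<alpha> \<noteq> 0 \<and> \<alpha>\<^sup>2 \<noteq> 1 \<and>
          (\<forall>x u. biq a x u = \<alpha> / (1 - \<alpha>\<^sup>2) * (x\<^sup>2 + u\<^sup>2)
                             - (1 + \<alpha>\<^sup>2) / (1 - \<alpha>\<^sup>2) * x * u
                             + \<delta>\<^sup>2 * (1 - \<alpha>\<^sup>2) / (4 * \<alpha>))))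
    \<and> (\<forall>g2 g3. g2 ^ 3 - 27 * g3\<^sup>2 \<noteq> 0 \<longrightarrow>
         (\<forall>x u. biq_disc a x u = 4 * x ^ 3 - g2 * x - g3) \<longrightarrow>
       (\<exists>\<alpha> s. s \<noteq> 0 \<and> s\<^sup>2 = 4 * \<alpha> ^ 3 - g2 * \<alpha> - g3 \<and>
          (\<forall>x u. biq a x u = 1 / s * ((x * u + \<alpha> * (x + u) + g2 / 4)\<^sup>2
                                         - (x + u + \<alpha>) * (4 * \<alpha> * x * u - g3)))))"
proof -
  have sc: "a 0 1 = a 1 0" "a 0 2 = a 2 0" "a 1 2 = a 2 1" using sym_coeffs[OF sym] by auto
  define p where "p = a 2 2"
  define q where "q = a 2 1"
  define c where "c = a 2 0"
  define s where "s = a 1 1"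
  define t where "t = a 1 0"
  define w where "w = a 0 0"
  have hb: "biq a = (\<lambda>x u. Hf p q c s t w x u)"
  proof (intro ext)
    fix x u
    show "biq a x u = Hf p q c s t w x u"
      unfolding biq_expand Hf_def p_def q_def c_def s_def t_def w_def sc
      by (simp add: algebra_simps)
  qed
  define D where "D = (\<lambda>x. (t + s*x + q*x^2)^2 - 4*(c + q*x + p*x^2)*(w + t*x + c*x^2))"
  have hd: "\<And>x u. biq_disc a x u = D x"
    unfolding disc_expand D_def p_def q_def c_def s_def t_def w_def sc by simp
  have C: "q^2 - 4*p*c = r4 \<and> 2*q * s - 4*p*t - 4*q*c = r3 \<and> s^2 - 2*q*t - 4*p*w - 4*c^2 = r2 \<and>
      2 * s*t - 4*q*w - 4*c*t = r1 \<and> t^2 - 4*c*w = r0"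
    if "\<forall>x. D x = r4*x^4 + r3*x^3 + r2*x^2 + r1*x + r0" for r4 r3 r2 r1 r0
    using coeffs[OF that[unfolded D_def]] by blast
  have c0: "(\<forall>x u. biq_disc a x u = 0) \<longrightarrow>
       (\<exists>\<alpha>. \<alpha> \<noteq> 0 \<and> (\<forall>x u. biq a x u = (x - u)\<^sup>2 / \<alpha>))
     \<or> (\<exists>\<gamma>0 \<gamma>1 \<gamma>2. \<forall>x u. biq a x u = (\<gamma>0 * x * u + \<gamma>1 * (x + u) + \<gamma>2)\<^sup>2)"
  proof
    assume H: "\<forall>x u. biq_disc a x u = 0"
    have "\<forall>x. D x = 0*x^4 + 0*x^3 + 0*x^2 + 0*x + 0" using H hd by simp
    from C[OF this] have E: "q^2 - 4*p*c = 0" "2*q* s - 4*p*t - 4*q*c = 0"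
      "s^2 - 2*q*t - 4*p*w - 4*c^2 = 0" "2* s*t - 4*q*w - 4*c*t = 0" "t^2 - 4*c*w = 0" by auto
    show "(\<exists>\<alpha>. \<alpha> \<noteq> 0 \<and> (\<forall>x u. biq a x u = (x - u)\<^sup>2 / \<alpha>))
     \<or> (\<exists>\<gamma>0 \<gamma>1 \<gamma>2. \<forall>x u. biq a x u = (\<gamma>0 * x * u + \<gamma>1 * (x + u) + \<gamma>2)\<^sup>2)"
      unfolding hb using case0[OF E] by simp
  qed
  have c1: "(\<forall>x u. biq_disc a x u = 1) \<longrightarrow>
       (\<exists>\<alpha>. \<alpha> \<noteq> 0 \<and> (\<forall>x u. biq a x u = (x - u)\<^sup>2 / (2 * \<alpha>) - \<alpha> / 2))
     \<or> (\<exists>\<gamma>0 \<gamma>1 \<gamma>2. \<gamma>1\<^sup>2 - 4 * \<gamma>0 * \<gamma>2 = 1 \<and>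
          (\<forall>x u. biq a x u = \<gamma>0 * (x + u)\<^sup>2 + \<gamma>1 * (x + u) + \<gamma>2))"
  proof
    assume H: "\<forall>x u. biq_disc a x u = 1"
    have "\<forall>x. D x = 0*x^4 + 0*x^3 + 0*x^2 + 0*x + 1" using H hd by simp
    from C[OF this] have E: "q^2 - 4*p*c = 0" "2*q* s - 4*p*t - 4*q*c = 0"
      "s^2 - 2*q*t - 4*p*w - 4*c^2 = 0" "2* s*t - 4*q*w - 4*c*t = 0" "t^2 - 4*c*w = 1" by auto
    show "(\<exists>\<alpha>. \<alpha> \<noteq> 0 \<and> (\<forall>x u. biq a x u = (x - u)\<^sup>2 / (2 * \<alpha>) - \<alpha> / 2))
     \<or> (\<exists>\<gamma>0 \<gamma>1 \<gamma>2. \<gamma>1\<^sup>2 - 4 * \<gamma>0 * \<gamma>2 = 1 \<and>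
          (\<forall>x u. biq a x u = \<gamma>0 * (x + u)\<^sup>2 + \<gamma>1 * (x + u) + \<gamma>2))"
      unfolding hb using case1[OF E] by simp
  qed
  have c2: "(\<forall>x u. biq_disc a x u = x) \<longrightarrow>
       (\<exists>\<alpha>. \<alpha> \<noteq> 0 \<and>
          (\<forall>x u. biq a x u = (x - u)\<^sup>2 / (4 * \<alpha>) - \<alpha> / 2 * (x + u) + \<alpha> ^ 3 / 4))"
  proof
    assume H: "\<forall>x u. biq_disc a x u = x"
    have "\<forall>x. D x = 0*x^4 + 0*x^3 + 0*x^2 + 1*x + 0" using H hd by simp
    from C[OF this] have E: "q^2 - 4*p*c = 0" "2*q* s - 4*p*t - 4*q*c = 0"
      "s^2 - 2*q*t - 4*p*w - 4*c^2 = 0" "2* s*t - 4*q*w - 4*c*t = 1" "t^2 - 4*c*w = 0" by auto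
    show "\<exists>\<alpha>. \<alpha> \<noteq> 0 \<and>
          (\<forall>x u. biq a x u = (x - u)\<^sup>2 / (4 * \<alpha>) - \<alpha> / 2 * (x + u) + \<alpha> ^ 3 / 4)"
      unfolding hb using casex[OF E] by simp
  qed
  have c3: "(\<forall>x u. biq_disc a x u = x\<^sup>2) \<longrightarrow>
       (\<exists>\<gamma>0 \<gamma>1 \<gamma>2. \<gamma>1\<^sup>2 - 4 * \<gamma>0 * \<gamma>2 = 1 \<and>
          (\<forall>x u. biq a x u = \<gamma>0 * x\<^sup>2 * u\<^sup>2 + \<gamma>1 * x * u + \<gamma>2))
     \<or> (\<exists>\<alpha>. \<alpha> \<noteq> 0 \<and> \<alpha>\<^sup>2 \<noteq> 1 \<and>
          (\<forall>x u. biq a x u = \<alpha> / (1 - \<alpha>\<^sup>2) * (x\<^sup>2 + u\<^sup>2)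
                             - (1 + \<alpha>\<^sup>2) / (1 - \<alpha>\<^sup>2) * x * u))"
  proof
    assume H: "\<forall>x u. biq_disc a x u = x\<^sup>2"
    have "\<forall>x. D x = 0*x^4 + 0*x^3 + 1*x^2 + 0*x + 0" using H hd by simp
    from C[OF this] have E: "q^2 - 4*p*c = 0" "2*q* s - 4*p*t - 4*q*c = 0"
      "s^2 - 2*q*t - 4*p*w - 4*c^2 = 1" "2* s*t - 4*q*w - 4*c*t = 0" "t^2 - 4*c*w = 0" by auto
    show "(\<exists>\<gamma>0 \<gamma>1 \<gamma>2. \<gamma>1\<^sup>2 - 4 * \<gamma>0 * \<gamma>2 = 1 \<and>
          (\<forall>x u. biq a x u = \<gamma>0 * x\<^sup>2 * u\<^sup>2 + \<gamma>1 * x * u + \<gamma>2))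
     \<or> (\<exists>\<alpha>. \<alpha> \<noteq> 0 \<and> \<alpha>\<^sup>2 \<noteq> 1 \<and>
          (\<forall>x u. biq a x u = \<alpha> / (1 - \<alpha>\<^sup>2) * (x\<^sup>2 + u\<^sup>2)
                             - (1 + \<alpha>\<^sup>2) / (1 - \<alpha>\<^sup>2) * x * u))"
      unfolding hb using casex2[OF E] by simp
  qed
  have c4: "\<forall>\<delta>. \<delta> \<noteq> 0 \<longrightarrow> (\<forall>x u. biq_disc a x u = x\<^sup>2 - \<delta>\<^sup>2) \<longrightarrow>
       (\<exists>\<alpha>. \<alpha> \<noteq> 0 \<and> \<alpha>\<^sup>2 \<noteq> 1 \<and>
          (\<forall>x u. biq a x u = \<alpha> / (1 - \<alpha>\<^sup>2) * (x\<^sup>2 + u\<^sup>2)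
                             - (1 + \<alpha>\<^sup>2) / (1 - \<alpha>\<^sup>2) * x * u
                             + \<delta>\<^sup>2 * (1 - \<alpha>\<^sup>2) / (4 * \<alpha>)))"
  proof (intro allI impI)
    fix \<delta> :: complex
    assume d: "\<delta> \<noteq> 0" and H: "\<forall>x u. biq_disc a x u = x\<^sup>2 - \<delta>\<^sup>2"
    have "\<forall>x. D x = 0*x^4 + 0*x^3 + 1*x^2 + 0*x + -(\<delta>^2)" using H hd by simp
    from C[OF this] have E: "q^2 - 4*p*c = 0" "2*q* s - 4*p*t - 4*q*c = 0"
      "s^2 - 2*q*t - 4*p*w - 4*c^2 = 1" "2* s*t - 4*q*w - 4*c*t = 0" "t^2 - 4*c*w = -(\<delta>^2)" by auto
    show "\<exists>\<alpha>. \<alpha> \<noteq> 0 \<and> \<alpha>\<^sup>2 \<noteq> 1 \<and>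
          (\<forall>x u. biq a x u = \<alpha> / (1 - \<alpha>\<^sup>2) * (x\<^sup>2 + u\<^sup>2)
                             - (1 + \<alpha>\<^sup>2) / (1 - \<alpha>\<^sup>2) * x * u
                             + \<delta>\<^sup>2 * (1 - \<alpha>\<^sup>2) / (4 * \<alpha>))"
      unfolding hb using casexd[OF d E] by simp
  qed
  have c5: "\<forall>g2 g3. g2 ^ 3 - 27 * g3\<^sup>2 \<noteq> 0 \<longrightarrow>
         (\<forall>x u. biq_disc a x u = 4 * x ^ 3 - g2 * x - g3) \<longrightarrow>
       (\<exists>\<alpha> s. s \<noteq> 0 \<and> s\<^sup>2 = 4 * \<alpha> ^ 3 - g2 * \<alpha> - g3 \<and>
          (\<forall>x u. biq a x u = 1 / s * ((x * u + \<alpha> * (x + u) + g2 / 4)\<^sup>2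
                                         - (x + u + \<alpha>) * (4 * \<alpha> * x * u - g3))))"
  proof (intro allI impI)
    fix g2 g3 :: complex
    assume H: "\<forall>x u. biq_disc a x u = 4 * x ^ 3 - g2 * x - g3"
    have "\<forall>x. D x = 0*x^4 + 4*x^3 + 0*x^2 + (-g2)*x + -g3" using H hd by simp
    from C[OF this] have E: "q^2 - 4*p*c = 0" "2*q* s - 4*p*t - 4*q*c = 4"
      "s^2 - 2*q*t - 4*p*w - 4*c^2 = 0" "2* s*t - 4*q*w - 4*c*t = -g2" "t^2 - 4*c*w = -g3" by auto
    show "\<exists>\<alpha> s. s \<noteq> 0 \<and> s\<^sup>2 = 4 * \<alpha> ^ 3 - g2 * \<alpha> - g3 \<and>
          (\<forall>x u. biq a x u = 1 / s * ((x * u + \<alpha> * (x + u) + g2 / 4)\<^sup>2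
                                         - (x + u + \<alpha>) * (4 * \<alpha> * x * u - g3)))"
      unfolding hb using case4[OF E] by simp
  qed
  show ?thesis using c0 c1 c2 c3 c4 c5 by blast
qed

end
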